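(* For variables $a,b,\alpha,\beta$ and any natural number $n\ge1$, \[ \frac{1}{\lfloor n/2\rfloor!}\Big(\alpha\frac{\partial}{\partial a}+\beta\frac{\partial}{\partial b}\Big)^{\lfloor n/2\rfloor}\Psi(a,b,n)=\Psi(\alpha,\beta,n),\qquad \frac{1}{\lfloor (n-1)/2\rfloor!}\Big(\alpha\frac{\partial}{\partial a}+\beta\frac{\partial}{\partial b}\Big)^{\lfloor (n-1)/2\rfloor}\Phi(a,b,n)=\Phi(\alpha,\beta,n), \] where $\alpha,\beta$ are treated as constants under $\partial/\partial a,\partial/\partial b$.
   Context: $\delta(m)=1$ for $m$ odd, $0$ for $m$ even; $\lfloor\cdot\rfloor$ is the floor. $\Psi(a,b,n)$, $\Phi(a,b,n)$ are the polynomials in $a,b$ defined by $\Psi(a,b,0)=2$, $\Psi(a,b,1)=1$, $\Psi(a,b,n+1)=(2a-b)^{\delta(n)}\Psi(a,b,n)-a\Psi(a,b,n-1)$ and $\Phi(a,b,0)=0$, $\Phi(a,b,1)=1$, $\Phi(a,b,n+1)=(2a-b)^{\delta(n+1)}\Phi(a,b,n)-a\Phi(a,b,n-1)$ for $n\ge1$. *)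

theory Defs
  imports "HOL-Analysis.Analysis"
begin

definition delta :: "nat \<Rightarrow> nat" where
  "delta m = (if odd m then 1 else 0)"

fun Psi :: "'a::comm_ring_1 \<Rightarrow> 'a \<Rightarrow> nat \<Rightarrow> 'a" where
  "Psi a b 0 = 2"
| "Psi a b (Suc 0) = 1"
| "Psi a b (Suc (Suc m)) =
     (2 * a - b) ^ delta (Suc m) * Psi a b (Suc m) - a * Psi a b m"

fun Phi :: "'a::comm_ring_1 \<Rightarrow> 'a \<Rightarrow> nat \<Rightarrow> 'a" where
  "Phi a b 0 = 0"
| "Phi a b (Suc 0) = 1"
| "Phi a b (Suc (Suc m)) =
     (2 * a - b) ^ delta (Suc (Suc m)) * Phi a b (Suc m) - a * Phi a b m"

definition dirD :: "real \<Rightarrow> real \<Rightarrow> (real \<Rightarrow> real \<Rightarrow> real) \<Rightarrow> (real \<Rightarrow> real \<Rightarrow> real)" where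
  "dirD \<alpha> \<beta> f = (\<lambda>x y. \<alpha> * deriv (\<lambda>t. f t y) x + \<beta> * deriv (\<lambda>t. f x t) y)"

end

theory Submission
  imports Defs
begin

inductive H :: "nat \<Rightarrow> (real \<Rightarrow> real \<Rightarrow> real) \<Rightarrow> bool" where
  Hz: "H d (\<lambda>x y. 0)"
| Hc: "H 0 (\<lambda>x y. c)"
| Hx: "H d f \<Longrightarrow> H (Suc d) (\<lambda>x y. x * f x y)"
| Hy: "H d f \<Longrightarrow> H (Suc d) (\<lambda>x y. y * f x y)"
| Hs: "H d f \<Longrightarrow> H d (\<lambda>x y. c * f x y)"
| Ha: "H d f \<Longrightarrow> H d g \<Longrightarrow> H d (\<lambda>x y. f x y + g x y)"

definition diff2 :: "(real \<Rightarrow> real \<Rightarrow> real) \<Rightarrow> bool" where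
  "diff2 f = (\<forall>x y. (\<lambda>t. f t y) field_differentiable at x \<and> (\<lambda>t. f x t) field_differentiable at y)"

lemma H_diff2: "H d f \<Longrightarrow> diff2 f"
  by (induction rule: H.induct)
     (auto simp: diff2_def intro!: field_differentiable_mult field_differentiable_add
        field_differentiable_const field_differentiable_ident)

lemma dirD_x: "diff2 f \<Longrightarrow> dirD \<alpha> \<beta> (\<lambda>x y. x * f x y) = (\<lambda>x y. \<alpha> * f x y + x * dirD \<alpha> \<beta> f x y)"
  unfolding dirD_def diff2_def
  by (auto simp: algebra_simps field_differentiable_ident field_differentiable_const intro!: ext)

lemma dirD_y: "diff2 f \<Longrightarrow> dirD \<alpha> \<beta> (\<lambda>x y. y * f x y) = (\<lambda>x y. \<beta> * f x y + y * dirD \<alpha> \<beta> f x y)"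
  unfolding dirD_def diff2_def
  by (auto simp: algebra_simps field_differentiable_ident field_differentiable_const intro!: ext)

lemma dirD_s: "diff2 f \<Longrightarrow> dirD \<alpha> \<beta> (\<lambda>x y. c * f x y) = (\<lambda>x y. c * dirD \<alpha> \<beta> f x y)"
  unfolding dirD_def diff2_def
  by (auto simp: algebra_simps field_differentiable_ident field_differentiable_const intro!: ext)

lemma dirD_a: "diff2 f \<Longrightarrow> diff2 g \<Longrightarrow> dirD \<alpha> \<beta> (\<lambda>x y. f x y + g x y) = (\<lambda>x y. dirD \<alpha> \<beta> f x y + dirD \<alpha> \<beta> g x y)"
  unfolding dirD_def diff2_def
  by (auto simp: algebra_simps intro!: ext)

lemma dirD_c: "dirD \<alpha> \<beta> (\<lambda>x y. c) = (\<lambda>x y. 0)"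
  unfolding dirD_def by simp

lemma H_main: "H d f \<Longrightarrow> (d = 0 \<longrightarrow> dirD \<alpha> \<beta> f = (\<lambda>x y. 0)) \<and> (d > 0 \<longrightarrow> H (d - 1) (dirD \<alpha> \<beta> f))
   \<and> dirD \<alpha> \<beta> f \<alpha> \<beta> = real d * f \<alpha> \<beta>"
proof (induction rule: H.induct)
  case (Hz d)
  then show ?case by (simp add: dirD_c H.Hz)
next
  case (Hc c)
  then show ?case by (simp add: dirD_c)
next
  case (Hx d f)
  have e: "dirD \<alpha> \<beta> (\<lambda>x y. x * f x y) = (\<lambda>x y. \<alpha> * f x y + x * dirD \<alpha> \<beta> f x y)"
    using Hx.hyps H_diff2 dirD_x by blast
  have "H d (\<lambda>x y. \<alpha> * f x y + x * dirD \<alpha> \<beta> f x y)"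
  proof (cases d)
    case 0
    then show ?thesis using Hx by (auto intro!: H.intros)
  next
    case (Suc m)
    then show ?thesis using Hx by (auto intro!: H.intros)
  qed
  then show ?case using e Hx by (simp add: algebra_simps)
next
  case (Hy d f)
  have e: "dirD \<alpha> \<beta> (\<lambda>x y. y * f x y) = (\<lambda>x y. \<beta> * f x y + y * dirD \<alpha> \<beta> f x y)"
    using Hy.hyps H_diff2 dirD_y by blast
  have "H d (\<lambda>x y. \<beta> * f x y + y * dirD \<alpha> \<beta> f x y)"
  proof (cases d)
    case 0
    then show ?thesis using Hy by (auto intro!: H.intros)
  next
    case (Suc m)
    then show ?thesis using Hy by (auto intro!: H.intros)
  qed
  then show ?case using e Hy by (simp add: algebra_simps)
next
  case (Hs d f c)
  have e: "dirD \<alpha> \<beta> (\<lambda>x y. c * f x y) = (\<lambda>x y. c * dirD \<alpha> \<beta> f x y)"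
    using Hs.hyps H_diff2 dirD_s by blast
  then show ?case using Hs by (auto intro!: H.intros)
next
  case (Ha d f g)
  have e: "dirD \<alpha> \<beta> (\<lambda>x y. f x y + g x y) = (\<lambda>x y. dirD \<alpha> \<beta> f x y + dirD \<alpha> \<beta> g x y)"
    using Ha.hyps H_diff2 dirD_a by blast
  then show ?case using Ha by (auto intro!: H.intros simp: algebra_simps)
qed

lemma H0_aux: "H d f \<Longrightarrow> d = 0 \<Longrightarrow> f a b = f c e"
  by (induction rule: H.induct) simp_all

lemma H_iter: "H d f \<Longrightarrow> (dirD \<alpha> \<beta> ^^ d) f a b = fact d * f \<alpha> \<beta>"
proof (induction d arbitrary: f)
  case 0
  then show ?case using H0_aux by simp
next
  case (Suc d)
  have m: "H d (dirD \<alpha> \<beta> f)" "dirD \<alpha> \<beta> f \<alpha> \<beta> = real (Suc d) * f \<alpha> \<beta>"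
    using H_main[OF Suc.prems, of \<alpha> \<beta>] by auto
  have "(dirD \<alpha> \<beta> ^^ Suc d) f = (dirD \<alpha> \<beta> ^^ d) (dirD \<alpha> \<beta> f)"
    by (simp add: funpow_Suc_right del: funpow.simps)
  then show ?case using Suc.IH[OF m(1)] m(2) by (simp add: algebra_simps)
qed

lemma H_cong: "H d f \<Longrightarrow> f = g \<Longrightarrow> H d g" by simp

lemma H_sub:
  assumes f: "H d f" and g: "H d g"
  shows "H d (\<lambda>x y. f x y - g x y)"
proof -
  have "H d (\<lambda>x y. f x y + (-1) * g x y)" by (rule H.Ha[OF f H.Hs[OF g]])
  moreover have "(\<lambda>x y. f x y + (-1) * g x y) = (\<lambda>x y. f x y - g x y)" by simp
  ultimately show ?thesis by (rule H_cong)
qed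

lemma H_lin:
  assumes f: "H d f"
  shows "H (Suc d) (\<lambda>x y. (2 * x - y) * f x y)"
proof -
  have "H (Suc d) (\<lambda>x y. 2 * (x * f x y) + (-1) * (y * f x y))"
    by (rule H.Ha[OF H.Hs[OF H.Hx[OF f]] H.Hs[OF H.Hy[OF f]]])
  moreover have "(\<lambda>x y. 2 * (x * f x y) + (-1) * (y * f x y)) = (\<lambda>x y. (2 * x - y) * f x y)"
    by (rule ext)+ (simp add: algebra_simps)
  ultimately show ?thesis by (rule H_cong)
qed

lemma H_PsiPhi: "(H (n div 2) (\<lambda>x y. Psi x y n) \<and> H ((n - 1) div 2) (\<lambda>x y. Phi x y n))
  \<and> (H (Suc n div 2) (\<lambda>x y. Psi x y (Suc n)) \<and> H (n div 2) (\<lambda>x y. Phi x y (Suc n)))"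
proof (induction n)
  case 0
  have "H 0 (\<lambda>x y. 2)" "H 0 (\<lambda>x y. 1)" "H 0 (\<lambda>x y. 0)" by (rule H.intros)+
  then show ?case by simp
next
  case (Suc n)
  then have IH: "H (n div 2) (\<lambda>x y. Psi x y n)" "H ((n - 1) div 2) (\<lambda>x y. Phi x y n)"
     "H (Suc n div 2) (\<lambda>x y. Psi x y (Suc n))" "H (n div 2) (\<lambda>x y. Phi x y (Suc n))" by auto
  have ps: "H (Suc (Suc n) div 2) (\<lambda>x y. Psi x y (Suc (Suc n)))"
  proof (cases "even n")
    case True
    then have d: "delta (Suc n) = 1" "Suc n div 2 = n div 2" "Suc (Suc n) div 2 = Suc (n div 2)"
      by (auto simp: delta_def)
    have "H (Suc (n div 2)) (\<lambda>x y. (2 * x - y) * Psi x y (Suc n) - x * Psi x y n)"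
    proof -
      have i3: "H (n div 2) (\<lambda>x y. Psi x y (Suc n))" using IH(3) d by simp
      show ?thesis using H_sub[OF H_lin[OF i3] H.Hx[OF IH(1)]] by simp
    qed
    then show ?thesis using d by simp
  next
    case False
    then have d: "delta (Suc n) = 0" "Suc n div 2 = Suc (n div 2)" "Suc (Suc n) div 2 = Suc (n div 2)"
      by (auto simp: delta_def elim: oddE)
    have "H (Suc (n div 2)) (\<lambda>x y. Psi x y (Suc n) - x * Psi x y n)"
    proof -
      have i3: "H (Suc (n div 2)) (\<lambda>x y. Psi x y (Suc n))" using IH(3) d by simp
      show ?thesis using H_sub[OF i3 H.Hx[OF IH(1)]] by simp
    qed
    then show ?thesis using d by simp
  qed
  have ph: "H (Suc n div 2) (\<lambda>x y. Phi x y (Suc (Suc n)))"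
  proof (cases "even n")
    case True
    then have d: "delta (Suc (Suc n)) = 0" "Suc n div 2 = n div 2"
      by (auto simp: delta_def)
    show ?thesis
    proof (cases n)
      case 0
      then show ?thesis by (simp add: numeral_2_eq_2 delta_def) (rule H.intros)
    next
      case (Suc m)
      with True have e: "n div 2 = Suc ((n - 1) div 2)" by (auto elim!: evenE)
      have "H (n div 2) (\<lambda>x y. Phi x y (Suc n) - x * Phi x y n)"
      proof -
        have i2: "H (n div 2) (\<lambda>x y. x * Phi x y n)" using H.Hx[OF IH(2)] e by simp
        show ?thesis using H_sub[OF IH(4) i2] by simp
      qed
      then show ?thesis using d by simp
    qed
  next
    case False
    then have d: "delta (Suc (Suc n)) = 1" "Suc n div 2 = Suc (n div 2)" "n div 2 = (n - 1) div 2"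
      by (auto simp: delta_def elim!: oddE)
    have "H (Suc (n div 2)) (\<lambda>x y. (2 * x - y) * Phi x y (Suc n) - x * Phi x y n)"
    proof -
      have i2: "H (Suc (n div 2)) (\<lambda>x y. x * Phi x y n)" using H.Hx[OF IH(2)] d by simp
      show ?thesis using H_sub[OF H_lin[OF IH(4)] i2] by simp
    qed
    then show ?thesis using d by simp
  qed
  show ?case using IH ps ph by simp
qed

theorem theorem8p5:
  fixes a b \<alpha> \<beta> :: real and n :: nat
  assumes "n \<ge> 1"
  shows "((dirD \<alpha> \<beta> ^^ (n div 2)) (\<lambda>x y. Psi x y n)) a b / fact (n div 2) = Psi \<alpha> \<beta> n
       \<and> ((dirD \<alpha> \<beta> ^^ ((n - 1) div 2)) (\<lambda>x y. Phi x y n)) a b / fact ((n - 1) div 2)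
           = Phi \<alpha> \<beta> n"
  using H_iter[of "n div 2" "\<lambda>x y. Psi x y n" \<alpha> \<beta> a b]
    H_iter[of "(n - 1) div 2" "\<lambda>x y. Phi x y n" \<alpha> \<beta> a b] H_PsiPhi[of n]
  by simp

end
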